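(* Let $1 \le k_1, k_2$ be integers. (a) If $m$ is an integer with $k_1 + k_2 - m \le \dim V$, then the Euclidean space $\mathfrak M$ (that is, the family $\mathcal L$ of lines together with the line orthogonality $\perp$ on $\mathcal L$) is definable in the structure $\langle S, \mathcal H_{k_1}, \mathcal H_{k_2}, \perp^{m}_{k_1,k_2}\rangle$. (b) If moreover $k_1,k_2<\dim V$, then the Euclidean space $\mathfrak M$ is definable in the structure $\mathfrak K := \langle S, \mathcal H_{k_1}, \mathcal H_{k_2}, \perp^{\circ}\cap(\mathcal H_{k_1}\times\mathcal H_{k_2})\rangle$.
   Context: Let $V$ be a vector space over a field with a nondegenerate symmetric bilinear form $\xi$ having no isotropic vectors ($\xi(v,v)\neq 0$ for $v\neq 0$). The Euclidean space $\mathfrak M$ has point set $S=V$; its (affine) subspaces are the sets $p+W$ ($p\in V$, $W$ a linear subspace, called the direction), of dimension $\dim W$ (points have dimension $0$). $\mathcal H_k$ is the family of $k$-dimensional subspaces and $\mathcal L=\mathcal H_1$ the family of lines; $\dim\mathfrak M=\dim V$. For lines, $L_1\perp L_2$ iff their directions are $\xi$-orthogonal. For subspaces $X_1,X_2$, $X_1\sqcup X_2$ is the least subspace containing $X_1\cup X_2$. For nonempty subspaces $X,Y$: $X\perp Y$ iff $\xi(b-a,d-c)=0$ for all $a,b\in X$, $c,d\in Y$; and $X\perp_x Y$ iff $X\perp Y$ and $X\cap Y\neq\emptyset$. Define $X_1\perp^{\circ}X_2$ iff there are a point $q\in X_1\cap X_2$ and subspaces $Z_1,Z_2$ with $q\in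 Z_1,Z_2$, $Z_i\perp_x X_1\cap X_2$, $Z_1\perp_x Z_2$, and $(X_1\cap X_2)\sqcup Z_i=X_i$ for $i=1,2$. Define $X_1\perp^{*}X_2$ iff $X_1\perp^{\circ}X_2$ and $X_1\cap X_2\neq X_1$, $X_1\cap X_2\neq X_2$. Write $X_1\perp^{m}_{k_1,k_2}X_2$ iff $X_1\perp^{*}X_2$, $X_1\in\mathcal H_{k_1}$, $X_2\in\mathcal H_{k_2}$ and $X_1\cap X_2\in\mathcal H_m$. "Definable" means first-order definable. *)

theory Defs
  imports Complex_Main
begin

definition anisotropic_space ::
  "('f::field \<Rightarrow> 'v::ab_group_add \<Rightarrow> 'v) \<Rightarrow> ('v \<Rightarrow> 'v \<Rightarrow> 'f) \<Rightarrow> bool" where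
  "anisotropic_space scale xi \<longleftrightarrow>
     vector_space scale \<and>
     (\<forall>u v. xi u v = xi v u) \<and>
     (\<forall>u v w. xi (u + v) w = xi u w + xi v w) \<and>
     (\<forall>a u w. xi (scale a u) w = a * xi u w) \<and>
     (\<forall>v. (\<forall>w. xi v w = 0) \<longrightarrow> v = 0) \<and>
     (\<forall>v. v \<noteq> 0 \<longrightarrow> xi v v \<noteq> 0)"

definition lin_dim_eq :: "('f::field \<Rightarrow> 'v::ab_group_add \<Rightarrow> 'v) \<Rightarrow> 'v set \<Rightarrow> nat \<Rightarrow> bool" where
  "lin_dim_eq scale W k \<longleftrightarrow>
     (\<exists>B. finite B \<and> card B = k \<and> \<not> module.dependent scale B \<and> module.span scale B = W)"

text \<open>dim V \<ge> n (allowing V infinite-dimensional): V contains n linearly independent vectors.\<close>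
definition dim_ge :: "('f::field \<Rightarrow> 'v::ab_group_add \<Rightarrow> 'v) \<Rightarrow> nat \<Rightarrow> bool" where
  "dim_ge scale n \<longleftrightarrow> (\<exists>B. finite B \<and> card B = n \<and> \<not> module.dependent scale B)"

definition affsub :: "('f::field \<Rightarrow> 'v::ab_group_add \<Rightarrow> 'v) \<Rightarrow> 'v set \<Rightarrow> bool" where
  "affsub scale X \<longleftrightarrow> (\<exists>p W. module.subspace scale W \<and> X = (\<lambda>w. p + w) ` W)"

definition Hk :: "('f::field \<Rightarrow> 'v::ab_group_add \<Rightarrow> 'v) \<Rightarrow> nat \<Rightarrow> 'v set set" where
  "Hk scale k = {X. \<exists>p W. module.subspace scale W \<and> lin_dim_eq scale W k \<and> X = (\<lambda>w. p + w) ` W}"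

definition join :: "('f::field \<Rightarrow> 'v::ab_group_add \<Rightarrow> 'v) \<Rightarrow> 'v set \<Rightarrow> 'v set \<Rightarrow> 'v set" where
  "join scale X1 X2 = \<Inter>{Z. affsub scale Z \<and> X1 \<union> X2 \<subseteq> Z}"

definition perp :: "('v::ab_group_add \<Rightarrow> 'v \<Rightarrow> 'f::field) \<Rightarrow> 'v set \<Rightarrow> 'v set \<Rightarrow> bool" where
  "perp xi X Y \<longleftrightarrow> X \<noteq> {} \<and> Y \<noteq> {} \<and>
     (\<forall>a\<in>X. \<forall>b\<in>X. \<forall>c\<in>Y. \<forall>d\<in>Y. xi (b - a) (d - c) = 0)"

definition perp_x :: "('v::ab_group_add \<Rightarrow> 'v \<Rightarrow> 'f::field) \<Rightarrow> 'v set \<Rightarrow> 'v set \<Rightarrow> bool" where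
  "perp_x xi X Y \<longleftrightarrow> perp xi X Y \<and> X \<inter> Y \<noteq> {}"

definition line_perp :: "('v::ab_group_add \<Rightarrow> 'v \<Rightarrow> 'f::field) \<Rightarrow> 'v set \<Rightarrow> 'v set \<Rightarrow> bool" where
  "line_perp xi L1 L2 \<longleftrightarrow>
     (\<forall>u\<in>{b - a |a b. a \<in> L1 \<and> b \<in> L1}. \<forall>w\<in>{b - a |a b. a \<in> L2 \<and> b \<in> L2}. xi u w = 0)"

definition perp_circ ::
  "('f::field \<Rightarrow> 'v::ab_group_add \<Rightarrow> 'v) \<Rightarrow> ('v \<Rightarrow> 'v \<Rightarrow> 'f) \<Rightarrow> 'v set \<Rightarrow> 'v set \<Rightarrow> bool" where
  "perp_circ scale xi X1 X2 \<longleftrightarrow>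
     (\<exists>q Z1 Z2. q \<in> X1 \<inter> X2 \<and> affsub scale Z1 \<and> affsub scale Z2 \<and> q \<in> Z1 \<and> q \<in> Z2 \<and>
        perp_x xi Z1 (X1 \<inter> X2) \<and> perp_x xi Z2 (X1 \<inter> X2) \<and> perp_x xi Z1 Z2 \<and>
        join scale (X1 \<inter> X2) Z1 = X1 \<and> join scale (X1 \<inter> X2) Z2 = X2)"

definition perp_star ::
  "('f::field \<Rightarrow> 'v::ab_group_add \<Rightarrow> 'v) \<Rightarrow> ('v \<Rightarrow> 'v \<Rightarrow> 'f) \<Rightarrow> 'v set \<Rightarrow> 'v set \<Rightarrow> bool" where
  "perp_star scale xi X1 X2 \<longleftrightarrow> perp_circ scale xi X1 X2 \<and> X1 \<inter> X2 \<noteq> X1 \<and> X1 \<inter> X2 \<noteq> X2"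

definition perp_m ::
  "('f::field \<Rightarrow> 'v::ab_group_add \<Rightarrow> 'v) \<Rightarrow> ('v \<Rightarrow> 'v \<Rightarrow> 'f) \<Rightarrow> nat \<Rightarrow> nat \<Rightarrow> nat \<Rightarrow> 'v set \<Rightarrow> 'v set \<Rightarrow> bool" where
  "perp_m scale xi m k1 k2 X1 X2 \<longleftrightarrow>
     perp_star scale xi X1 X2 \<and> X1 \<in> Hk scale k1 \<and> X2 \<in> Hk scale k2 \<and> X1 \<inter> X2 \<in> Hk scale m"

text \<open>Three-sorted first-order formulas: variables of sort 0 range over points,
of sort 1 over members of the first family, of sort 2 over members of the second;
atomic formulas are equalities within a sort, incidence (point in block) and R(X,Y).\<close>
datatype fo =
    EqP nat nat | Eq1 nat nat | Eq2 nat nat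
  | In1 nat nat | In2 nat nat | Rel nat nat
  | Neg fo | Conj fo fo
  | ExP nat fo | Ex1 nat fo | Ex2 nat fo

fun sat :: "'p set \<Rightarrow> 'p set set \<Rightarrow> 'p set set \<Rightarrow> ('p set \<Rightarrow> 'p set \<Rightarrow> bool)
            \<Rightarrow> (nat \<Rightarrow> 'p) \<Rightarrow> (nat \<Rightarrow> 'p set) \<Rightarrow> (nat \<Rightarrow> 'p set) \<Rightarrow> fo \<Rightarrow> bool" where
  "sat S H1 H2 R e0 e1 e2 (EqP i j) = (e0 i = e0 j)"
| "sat S H1 H2 R e0 e1 e2 (Eq1 i j) = (e1 i = e1 j)"
| "sat S H1 H2 R e0 e1 e2 (Eq2 i j) = (e2 i = e2 j)"
| "sat S H1 H2 R e0 e1 e2 (In1 i j) = (e0 i \<in> e1 j)"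
| "sat S H1 H2 R e0 e1 e2 (In2 i j) = (e0 i \<in> e2 j)"
| "sat S H1 H2 R e0 e1 e2 (Rel i j) = R (e1 i) (e2 j)"
| "sat S H1 H2 R e0 e1 e2 (Neg \<phi>) = (\<not> sat S H1 H2 R e0 e1 e2 \<phi>)"
| "sat S H1 H2 R e0 e1 e2 (Conj \<phi> \<psi>) = (sat S H1 H2 R e0 e1 e2 \<phi> \<and> sat S H1 H2 R e0 e1 e2 \<psi>)"
| "sat S H1 H2 R e0 e1 e2 (ExP x \<phi>) = (\<exists>a\<in>S. sat S H1 H2 R (e0(x := a)) e1 e2 \<phi>)"
| "sat S H1 H2 R e0 e1 e2 (Ex1 x \<phi>) = (\<exists>X\<in>H1. sat S H1 H2 R e0 (e1(x := X)) e2 \<phi>)"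
| "sat S H1 H2 R e0 e1 e2 (Ex2 x \<phi>) = (\<exists>Y\<in>H2. sat S H1 H2 R e0 e1 (e2(x := Y)) \<phi>)"

text \<open>The structure \<langle>S, Lines, \<perp>\<rangle> is (parameter-free) first-order definable in
\<langle>S, H1, H2, R\<rangle>: the line relation "a \<noteq> b and c lies on the line through a, b"
and the relation "a \<noteq> b, c \<noteq> d and line ab \<perp> line cd" are definable by formulas
whose free variables are point variables 0,1,2 (resp. 0,1,2,3).\<close>
definition fo_definable_in ::
  "'p set \<Rightarrow> 'p set set \<Rightarrow> ('p set \<Rightarrow> 'p set \<Rightarrow> bool)
   \<Rightarrow> 'p set set \<Rightarrow> 'p set set \<Rightarrow> ('p set \<Rightarrow> 'p set \<Rightarrow> bool) \<Rightarrow> bool" where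
  "fo_definable_in S Lines LPerp H1 H2 R \<longleftrightarrow>
     (\<exists>\<phi> \<psi>.
        (\<forall>e0 e1 e2. (\<forall>i. e0 i \<in> S) \<longrightarrow>
           (sat S H1 H2 R e0 e1 e2 \<phi> \<longleftrightarrow>
              e0 0 \<noteq> e0 1 \<and> (\<exists>L\<in>Lines. e0 0 \<in> L \<and> e0 1 \<in> L \<and> e0 2 \<in> L))) \<and>
        (\<forall>e0 e1 e2. (\<forall>i. e0 i \<in> S) \<longrightarrow>
           (sat S H1 H2 R e0 e1 e2 \<psi> \<longleftrightarrow>
              e0 0 \<noteq> e0 1 \<and> e0 2 \<noteq> e0 3 \<and>
              (\<exists>L1\<in>Lines. \<exists>L2\<in>Lines. e0 0 \<in> L1 \<and> e0 1 \<in> L1 \<and> e0 2 \<in> L2 \<and> e0 3 \<in> L2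
                 \<and> LPerp L1 L2))))"

end

theory Submission
  imports Defs
begin


locale aniso =
  fixes scale :: "'f::field \<Rightarrow> 'v::ab_group_add \<Rightarrow> 'v" and xi :: "'v \<Rightarrow> 'v \<Rightarrow> 'f"
  assumes an: "anisotropic_space scale xi"
begin

lemmas an' = an[unfolded anisotropic_space_def]
lemma vs: "vector_space scale" using an' by (rule conjunct1)
sublocale vector_space scale by (rule vs)

lemma xi_sym: "xi u v = xi v u" using an'[THEN conjunct2, THEN conjunct1] by blast
lemma xi_add1: "xi (u + v) w = xi u w + xi v w" using an'[THEN conjunct2, THEN conjunct2, THEN conjunct1] by blast
lemma xi_scale1: "xi (scale a u) w = a * xi u w" using an'[THEN conjunct2, THEN conjunct2, THEN conjunct2, THEN conjunct1] by blast
lemma xi_aniso: "v \<noteq> 0 \<Longrightarrow> xi v v \<noteq> 0" using an'[THEN conjunct2, THEN conjunct2, THEN conjunct2, THEN conjunct2, THEN conjunct2] by blast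
lemma xi_zero1[simp]: "xi 0 w = 0"
proof -
  have "xi (0+0) w = xi 0 w + xi 0 w" by (rule xi_add1)
  hence "xi 0 w + xi 0 w = xi 0 w + 0" by simp
  thus ?thesis by (rule add_left_imp_eq)
qed
lemma xi_self: "xi v v = 0 \<longleftrightarrow> v = 0" using xi_aniso by auto
lemma xi_zero2[simp]: "xi w 0 = 0" by (subst xi_sym) simp
lemma xi_add2: "xi w (u + v) = xi w u + xi w v" by (simp add: xi_sym[of w] xi_add1)
lemma xi_scale2: "xi w (scale a u) = a * xi w u" by (simp add: xi_sym[of w] xi_scale1)
lemma xi_minus1: "xi (- u) w = - xi u w"
proof -
  have "xi (u + - u) w = xi u w + xi (-u) w" by (rule xi_add1)
  hence "xi u w + xi (-u) w = 0" by simp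
    thus ?thesis by (rule minus_unique[symmetric])
qed
lemma xi_diff1: "xi (u - v) w = xi u w - xi v w"
  using xi_add1[of u "-v" w] by (simp add: xi_minus1)
lemma xi_diff2: "xi w (u - v) = xi w u - xi w v"
  by (simp add: xi_sym[of w] xi_diff1)
lemma xi_sum1: "xi (sum f A) w = (\<Sum>a\<in>A. xi (f a) w)"
  by (induction A rule: infinite_finite_induct) (auto simp: xi_add1)

definition orth :: "'v set \<Rightarrow> bool" where
  "orth T \<longleftrightarrow> 0 \<notin> T \<and> (\<forall>s\<in>T. \<forall>t\<in>T. s \<noteq> t \<longrightarrow> xi s t = 0)"

lemma perp_span1:
  assumes "\<forall>a\<in>A. xi a b = 0" "v \<in> span A" shows "xi v b = 0"
  using assms(2) by (induction rule: span_induct_alt) (auto simp: xi_add1 xi_scale1 assms(1))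

lemma perp_span:
  assumes "\<forall>a\<in>A. \<forall>b\<in>B. xi a b = 0" "u \<in> span A" "w \<in> span B" shows "xi u w = 0"
proof -
  have "\<forall>b\<in>B. xi b u = 0"
  proof
    fix b assume "b \<in> B"
    hence "\<forall>a\<in>A. xi a b = 0" using assms(1) by blast
    hence "xi u b = 0" using perp_span1 assms(2) by blast
    thus "xi b u = 0" by (simp add: xi_sym)
  qed
  hence "xi w u = 0" using perp_span1 assms(3) by blast
  thus ?thesis by (simp add: xi_sym)
qed

lemma orth_indep: assumes "orth T" shows "independent T"
  unfolding independent_explicit_finite_subsets
proof (intro allI impI ballI)
  fix S u v assume S: "S \<subseteq> T" "finite S" and z: "(\<Sum>v\<in>S. scale (u v) v) = 0" and v: "v \<in> S"
  have "0 = xi (\<Sum>v\<in>S. scale (u v) v) v" using z by simp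
  also have "\<dots> = (\<Sum>w\<in>S. u w * xi w v)" by (simp add: xi_sum1 xi_scale1)
  also have "\<dots> = u v * xi v v + (\<Sum>w\<in>S-{v}. u w * xi w v)" using S v by (simp add: sum.remove)
  also have "(\<Sum>w\<in>S-{v}. u w * xi w v) = 0"
    using assms S v unfolding orth_def by (intro sum.neutral) auto
  finally have "u v * xi v v = 0" by simp
  moreover have "xi v v \<noteq> 0" using assms S v xi_self unfolding orth_def by auto
  ultimately show "u v = 0" by simp
qed

definition proj :: "'v set \<Rightarrow> 'v \<Rightarrow> 'v" where
  "proj T v = (\<Sum>t\<in>T. scale (xi v t / xi t t) t)"

lemma proj_span: "proj T v \<in> span T"
  unfolding proj_def by (intro span_sum span_scale span_base)

lemma proj_perp: assumes "finite T" "orth T" "t \<in> T" shows "xi (v - proj T v) t = 0"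
proof -
  have "xi (proj T v) t = (\<Sum>s\<in>T. (xi v s / xi s s) * xi s t)"
    unfolding proj_def by (simp add: xi_sum1 xi_scale1)
  also have "\<dots> = (xi v t / xi t t) * xi t t + (\<Sum>s\<in>T-{t}. (xi v s / xi s s) * xi s t)"
    using assms by (simp add: sum.remove)
  also have "(\<Sum>s\<in>T-{t}. (xi v s / xi s s) * xi s t) = 0"
    using assms unfolding orth_def by (intro sum.neutral) auto
  also have "xi t t \<noteq> 0" using assms xi_self unfolding orth_def by auto
  ultimately show ?thesis by (simp add: xi_diff1)
qed

lemma proj_id: assumes "finite T" "orth T" "v \<in> span T" shows "proj T v = v"
proof -
  let ?w = "v - proj T v"
  have w: "?w \<in> span T" using assms(3) proj_span span_diff by blast
  have "\<forall>t\<in>T. xi t ?w = 0" using proj_perp[OF assms(1,2)] by (simp add: xi_sym)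
  hence "xi ?w ?w = 0" using perp_span1 w by blast
  thus ?thesis using xi_self by simp
qed

lemma span_sub_char:
  assumes "finite T" "orth T" "P \<subseteq> T" "v \<in> span T" "\<forall>t\<in>T-P. xi v t = 0"
  shows "v \<in> span P"
proof -
  have "v = proj T v" using proj_id assms by simp
  also have "\<dots> = (\<Sum>t\<in>P. scale (xi v t / xi t t) t)"
    unfolding proj_def using assms by (intro sum.mono_neutral_right) auto
  also have "\<dots> \<in> span P" by (intro span_sum span_scale span_base)
  finally show ?thesis .
qed

end

context aniso begin

lemma orth_insert:
  assumes "orth T" "v \<noteq> 0" "\<forall>t\<in>T. xi v t = 0"
  shows "orth (insert v T)" "v \<notin> T"
proof -
  show "v \<notin> T" using assms xi_self by auto
  have "xi t v = 0" if "t \<in> T" for t using assms(3) that by (simp add: xi_sym[of t v])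
  thus "orth (insert v T)" using assms unfolding orth_def by auto
qed

lemma orth_subset: "orth T \<Longrightarrow> S \<subseteq> T \<Longrightarrow> orth S"
  unfolding orth_def by blast

lemma ext1:
  assumes S: "subspace S" and T: "T \<subseteq> S" "finite T" "orth T"
    and B: "B \<subseteq> S" "independent B" "finite B" and c: "card T < card B"
  shows "\<exists>v\<in>S. v \<noteq> 0 \<and> (\<forall>t\<in>T. xi v t = 0)"
proof -
  have "\<not> B \<subseteq> span T"
  proof
    assume "B \<subseteq> span T"
    hence "card B \<le> card T" using independent_span_bound[OF T(2) B(2)] by blast
    thus False using c by simp
  qed
  then obtain b where b: "b \<in> B" "b \<notin> span T" by blast
  let ?v = "b - proj T b"
  have "span T \<subseteq> S" using span_minimal[OF T(1) S] .
  hence "?v \<in> S" using b B(1) proj_span subspace_diff[OF S] by blast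
  moreover have "?v \<noteq> 0" using b proj_span[of T b] by force
  moreover have "\<forall>t\<in>T. xi ?v t = 0" using proj_perp T by blast
  ultimately show ?thesis by blast
qed

lemma ext:
  assumes S: "subspace S" and T: "T \<subseteq> S" "finite T" "orth T"
    and B: "B \<subseteq> S" "independent B" "finite B" and n: "card T \<le> n" "n \<le> card B"
  shows "\<exists>T'. T \<subseteq> T' \<and> T' \<subseteq> S \<and> finite T' \<and> orth T' \<and> card T' = n"
  using T n
proof (induction "n - card T" arbitrary: T)
  case 0
  thus ?case by (intro exI[of _ T]) auto
next
  case (Suc k)
  hence "card T < card B" by linarith
  then obtain v where v: "v \<in> S" "v \<noteq> 0" "\<forall>t\<in>T. xi v t = 0"
    using ext1[OF S Suc.prems(1-3) B] by blast
  let ?T = "insert v T"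
  have o: "orth ?T" "v \<notin> T" using orth_insert[OF Suc.prems(3) v(2,3)] by auto
  have c: "card ?T = Suc (card T)" using o Suc.prems(2) by simp
  have "\<exists>T'. ?T \<subseteq> T' \<and> T' \<subseteq> S \<and> finite T' \<and> orth T' \<and> card T' = n"
    using Suc.hyps(1)[of ?T] Suc.hyps(2) Suc.prems v(1) o c by auto
  thus ?case by blast
qed

lemma span_eq_card:
  assumes T: "finite T" "orth T" "T \<subseteq> span B" and B: "independent B" "finite B"
    and c: "card T = card B"
  shows "span T = span B"
proof -
  have "B \<subseteq> span T"
  proof
    fix b assume b: "b \<in> B"
    show "b \<in> span T"
    proof (rule ccontr)
      assume nb: "b \<notin> span T"
      hence i: "independent (insert b T)" using independent_insertI orth_indep T(2) by blast
      have "insert b T \<subseteq> span B" using T(3) b span_base by blast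
      hence "card (insert b T) \<le> card B" using independent_span_bound[OF B(2) i] by blast
      moreover have "b \<notin> T" using nb span_base by blast
      ultimately show False using c T(1) by simp
    qed
  qed
  thus ?thesis using T(3) span_eq by blast
qed

lemma dim_ge_mono: "dim_ge scale n \<Longrightarrow> k \<le> n \<Longrightarrow> dim_ge scale k"
  unfolding dim_ge_def
proof (elim exE conjE)
  fix B assume B: "finite B" "card B = n" "\<not> module.dependent scale B" and k: "k \<le> n"
  obtain A where "A \<subseteq> B" "card A = k" using obtain_subset_with_card_n[of k B] B k by auto
  moreover have "finite A" using \<open>A \<subseteq> B\<close> B(1) finite_subset by blast
  moreover have "\<not> module.dependent scale A" using independent_mono[OF B(3) \<open>A \<subseteq> B\<close>] .
  ultimately show "\<exists>B. finite B \<and> card B = k \<and> \<not> module.dependent scale B" by blast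
qed

lemma ext_univ:
  assumes "dim_ge scale n" "finite T" "orth T" "card T \<le> n"
  shows "\<exists>T'. T \<subseteq> T' \<and> finite T' \<and> orth T' \<and> card T' = n"
proof -
  obtain B where B: "finite B" "card B = n" "independent B" using assms(1) unfolding dim_ge_def by blast
  show ?thesis using ext[OF subspace_UNIV _ assms(2,3) _ B(3,1)] B(2) assms(4) by auto
qed

end


definition dir :: "'v::ab_group_add set \<Rightarrow> 'v set" where
  "dir X = {b - a |a b. a \<in> X \<and> b \<in> X}"

lemma perp_dir: "perp xi X Y \<longleftrightarrow> X \<noteq> {} \<and> Y \<noteq> {} \<and> (\<forall>u\<in>dir X. \<forall>w\<in>dir Y. xi u w = 0)"
  unfolding perp_def dir_def by blast

lemma line_perp_dir: "line_perp xi L1 L2 \<longleftrightarrow> (\<forall>u\<in>dir L1. \<forall>w\<in>dir L2. xi u w = 0)"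
  unfolding line_perp_def dir_def by blast

lemma tr_mem[simp]: "(z::'v::ab_group_add) \<in> (\<lambda>w. p + w) ` S \<longleftrightarrow> z - p \<in> S"
proof
  assume "z \<in> (\<lambda>w. p + w) ` S" then obtain w where "w \<in> S" "z = p + w" by blast
  thus "z - p \<in> S" by simp
next
  assume "z - p \<in> S"
  moreover have "z = p + (z - p)" by (metis add.commute diff_add_cancel)
  ultimately show "z \<in> (\<lambda>w. p + w) ` S" by blast
qed

context aniso begin

lemma tr_rebase:
  assumes S: "subspace S" and q: "q \<in> (\<lambda>w. p + w) ` S"
  shows "(\<lambda>w. p + w) ` S = (\<lambda>w. q + w) ` S"
proof (rule set_eqI)
  fix z
  have qp: "q - p \<in> S" using q by simp
  have e1: "z - q = (z - p) - (q - p)" by (simp add: algebra_simps)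
  have e2: "z - p = (z - q) + (q - p)" by (simp add: algebra_simps)
  have "z - p \<in> S \<longleftrightarrow> z - q \<in> S"
  proof
    assume "z - p \<in> S" thus "z - q \<in> S" using subspace_diff[OF S _ qp] e1 by metis
  next
    assume "z - q \<in> S" thus "z - p \<in> S" using subspace_add[OF S _ qp] e2 by metis
  qed
  thus "z \<in> (\<lambda>w. p + w) ` S \<longleftrightarrow> z \<in> (\<lambda>w. q + w) ` S" by (simp only: tr_mem)
qed

lemma dir_tr: assumes S: "subspace S" shows "dir ((\<lambda>w. p + w) ` S) = S"
proof (rule set_eqI)
  fix u
  show "u \<in> dir ((\<lambda>w. p + w) ` S) \<longleftrightarrow> u \<in> S"
  proof
    assume "u \<in> dir ((\<lambda>w. p + w) ` S)"
    then obtain a b where ab: "a - p \<in> S" "b - p \<in> S" "u = b - a" unfolding dir_def by auto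
    have "u = (b - p) - (a - p)" using ab(3) by (simp add: algebra_simps)
    thus "u \<in> S" using subspace_diff[OF S ab(2,1)] by simp
  next
    assume "u \<in> S"
    moreover have "p - p \<in> S" using subspace_0[OF S] by simp
    moreover have "u = (p + u) - p" by simp
    ultimately show "u \<in> dir ((\<lambda>w. p + w) ` S)" unfolding dir_def
      by (intro CollectI exI[of _ p] exI[of _ "p + u"]) simp
  qed
qed

lemma tr_nonempty: "subspace S \<Longrightarrow> p \<in> (\<lambda>w. p + w) ` S"
  using subspace_0 by simp

lemma affsub_tr: "subspace S \<Longrightarrow> affsub scale ((\<lambda>w. p + w) ` S)"
  unfolding affsub_def by blast

lemma tr_Int: "(\<lambda>w. (q::'v) + w) ` S1 \<inter> (\<lambda>w. q + w) ` S2 = (\<lambda>w. q + w) ` (S1 \<inter> S2)"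
  by (rule set_eqI) simp

lemma tr_inj:
  assumes "(\<lambda>w. (q::'v) + w) ` S1 = (\<lambda>w. q + w) ` S2" shows "S1 = S2"
proof (rule set_eqI)
  fix u
  have "q + u \<in> (\<lambda>w. q + w) ` S1 \<longleftrightarrow> q + u \<in> (\<lambda>w. q + w) ` S2" using assms by simp
  thus "u \<in> S1 \<longleftrightarrow> u \<in> S2" by simp
qed

lemma join_tr:
  assumes S1: "subspace S1" and S2: "subspace S2"
  shows "join scale ((\<lambda>w. q + w) ` S1) ((\<lambda>w. q + w) ` S2) = (\<lambda>w. q + w) ` span (S1 \<union> S2)"
proof -
  let ?Y = "(\<lambda>w. q + w) ` span (S1 \<union> S2)"
  let ?F = "{Z. affsub scale Z \<and> (\<lambda>w. q + w) ` S1 \<union> (\<lambda>w. q + w) ` S2 \<subseteq> Z}"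
  have Y1: "affsub scale ?Y" by (rule affsub_tr) simp
  have Y2: "(\<lambda>w. q + w) ` S1 \<union> (\<lambda>w. q + w) ` S2 \<subseteq> ?Y"
  proof
    fix z assume "z \<in> (\<lambda>w. q + w) ` S1 \<union> (\<lambda>w. q + w) ` S2"
    hence "z - q \<in> S1 \<union> S2" by auto
    hence "z - q \<in> span (S1 \<union> S2)" using span_base by blast
    thus "z \<in> ?Y" by simp
  qed
  have "?Y \<in> ?F" using Y1 Y2 by blast
  hence le: "\<Inter>?F \<subseteq> ?Y" by (rule Inter_lower)
  have ge: "?Y \<subseteq> Z" if Z: "Z \<in> ?F" for Z
  proof -
    have Za: "affsub scale Z" and sub: "(\<lambda>w. q + w) ` S1 \<union> (\<lambda>w. q + w) ` S2 \<subseteq> Z" using Z by auto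
    obtain p W where W: "subspace W" "Z = (\<lambda>w. p + w) ` W" using Za unfolding affsub_def by blast
    have qZ: "q \<in> Z" using sub tr_nonempty[OF S1] by blast
    have Zq: "Z = (\<lambda>w. q + w) ` W" using tr_rebase[OF W(1)] qZ W(2) by blast
    have "S1 \<union> S2 \<subseteq> W"
    proof
      fix u assume "u \<in> S1 \<union> S2"
      hence "q + u \<in> Z" using sub by auto
      thus "u \<in> W" using Zq by simp
    qed
    hence "span (S1 \<union> S2) \<subseteq> W" using span_minimal W(1) by blast
    thus ?thesis using Zq by auto
  qed
  have "?Y \<subseteq> \<Inter>?F" using ge by blast
  thus ?thesis unfolding join_def using le by blast
qed

lemma span_Un_span: "span (span A \<union> span C) = span ((A::'v set) \<union> C)"
proof (rule antisym)
  show "span (A \<union> C) \<subseteq> span (span A \<union> span C)" by (intro span_mono) (auto intro: span_base)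
  have "span A \<union> span C \<subseteq> span (A \<union> C)" using span_mono by blast
  thus "span (span A \<union> span C) \<subseteq> span (A \<union> C)" using span_minimal by blast
qed

lemma Hk_orth:
  assumes "X \<in> Hk scale k"
  shows "\<exists>p Ob. finite Ob \<and> orth Ob \<and> card Ob = k \<and> X = (\<lambda>w. p + w) ` span Ob"
proof -
  obtain p W B where W: "subspace W" "X = (\<lambda>w. p + w) ` W" and B: "finite B" "card B = k" "independent B" "span B = W"
    using assms unfolding Hk_def lin_dim_eq_def by blast
  have o0: "orth {}" by (simp add: orth_def)
  have "\<exists>T'. {} \<subseteq> T' \<and> T' \<subseteq> span B \<and> finite T' \<and> orth T' \<and> card T' = k"
    using ext[OF subspace_span empty_subsetI finite.emptyI o0 span_superset B(3) B(1), of k] B(2) by simp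
  then obtain T where T: "T \<subseteq> span B" "finite T" "orth T" "card T = k" by blast
  have "span T = span B" using span_eq_card[OF T(2,3,1) B(3,1)] T(4) B(2) by simp
  hence "X = (\<lambda>w. p + w) ` span T" using W B by simp
  thus ?thesis using T(2-4) by blast
qed

lemma orth_Hk:
  assumes "finite Ob" "orth Ob" shows "(\<lambda>w. p + w) ` span Ob \<in> Hk scale (card Ob)"
  unfolding Hk_def lin_dim_eq_def
  by (rule CollectI, rule exI[of _ p], rule exI[of _ "span Ob"]) (use assms orth_indep in auto)

end

context aniso begin

lemma affsub_at:
  assumes "affsub scale X" "q \<in> X" shows "\<exists>S. subspace S \<and> X = (\<lambda>w. q + w) ` S"
proof -
  obtain p S where S: "subspace S" "X = (\<lambda>w. p + w) ` S" using assms(1) unfolding affsub_def by blast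
  thus ?thesis using tr_rebase[OF S(1)] assms(2) by blast
qed

lemma span_sub_eq: "subspace S \<Longrightarrow> span S = S" by simp

lemma soundA:
  assumes X1: "affsub scale X1" and X2: "affsub scale X2" and pc: "perp_circ scale xi X1 X2"
    and x: "x \<in> X1" "x \<in> X2" and y: "y \<in> X2"
  shows "\<exists>w p'. y - x = w + p' \<and> w \<in> dir (X1 \<inter> X2) \<and> (\<forall>d\<in>dir X1. xi p' d = 0)"
proof -
  obtain q Z1 Z2 where q: "q \<in> X1 \<inter> X2" and Z: "affsub scale Z1" "affsub scale Z2" "q \<in> Z1" "q \<in> Z2"
    and p1: "perp_x xi Z1 (X1 \<inter> X2)" and p2: "perp_x xi Z2 (X1 \<inter> X2)" and p12: "perp_x xi Z1 Z2"
    and j1: "join scale (X1 \<inter> X2) Z1 = X1" and j2: "join scale (X1 \<inter> X2) Z2 = X2"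
    using pc unfolding perp_circ_def by blast
  obtain S1 where S1: "subspace S1" "X1 = (\<lambda>w. q + w) ` S1" using affsub_at[OF X1] q by blast
  obtain S2 where S2: "subspace S2" "X2 = (\<lambda>w. q + w) ` S2" using affsub_at[OF X2] q by blast
  obtain U1 where U1: "subspace U1" "Z1 = (\<lambda>w. q + w) ` U1" using affsub_at[OF Z(1,3)] by blast
  obtain U2 where U2: "subspace U2" "Z2 = (\<lambda>w. q + w) ` U2" using affsub_at[OF Z(2,4)] by blast
  let ?W = "S1 \<inter> S2"
  have W: "subspace ?W" using subspace_inter S1(1) S2(1) by blast
  have M: "X1 \<inter> X2 = (\<lambda>w. q + w) ` ?W" using S1 S2 tr_Int by simp
  have "(\<lambda>w. q + w) ` span (?W \<union> U1) = (\<lambda>w. q + w) ` S1"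
    using j1 join_tr[OF W U1(1), of q] M U1 S1 by simp
  hence eS1: "S1 = span (?W \<union> U1)" using tr_inj by metis
  have "(\<lambda>w. q + w) ` span (?W \<union> U2) = (\<lambda>w. q + w) ` S2"
    using j2 join_tr[OF W U2(1), of q] M U2 S2 by simp
  hence eS2: "S2 = span (?W \<union> U2)" using tr_inj by metis
  have o2W: "\<forall>u\<in>U2. \<forall>w\<in>?W. xi u w = 0"
    using p2 unfolding perp_x_def perp_dir using dir_tr[OF U2(1)] dir_tr[OF W] U2(2) M by metis
  have o12: "\<forall>u\<in>U1. \<forall>w\<in>U2. xi u w = 0"
    using p12 unfolding perp_x_def perp_dir using dir_tr[OF U2(1)] dir_tr[OF U1(1)] U2(2) U1(2) by metis
  have "y - q \<in> span (?W \<union> U2)" using y S2 eS2 by simp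
  then obtain a b where ab: "y - q = a + b" "a \<in> span ?W" "b \<in> span U2" unfolding span_Un by blast
  have a: "a \<in> ?W" using ab(2) unfolding span_sub_eq[OF W] .
  have b: "b \<in> U2" using ab(3) unfolding span_sub_eq[OF U2(1)] .
  have xq: "x - q \<in> ?W" using x S1 S2 by simp
  have e: "y - x = (a - (x - q)) + b" using ab(1) by (simp add: algebra_simps)
  have wM: "a - (x - q) \<in> dir (X1 \<inter> X2)" using M dir_tr[OF W] subspace_diff[OF W a xq] by simp
  have "\<forall>d\<in>dir X1. xi b d = 0"
  proof
    fix d assume "d \<in> dir X1"
    hence "d \<in> span (?W \<union> U1)" using dir_tr[OF S1(1)] S1(2) eS1 by simp
    then obtain a' b' where ab': "d = a' + b'" "a' \<in> span ?W" "b' \<in> span U1" unfolding span_Un by blast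
    have a': "a' \<in> ?W" using ab'(2) unfolding span_sub_eq[OF W] .
    have "b' \<in> U1" using ab'(3) unfolding span_sub_eq[OF U1(1)] .
    hence "xi b a' = 0" "xi b' b = 0" using o2W o12 b a' \<open>b' \<in> U1\<close> by auto
    thus "xi b d = 0" using ab'(1) by (simp add: xi_add2 xi_sym[of b' b])
  qed
  thus ?thesis using e wM by blast
qed

end

context aniso begin

lemma orth_disj:
  assumes "orth T" "P \<subseteq> T" "Q \<subseteq> T" "P \<inter> Q = {}" "u \<in> span P" "w \<in> span Q"
  shows "xi u w = 0"
proof -
  have "\<forall>a\<in>P. \<forall>b\<in>Q. xi a b = 0"
  proof (intro ballI)
    fix a b assume "a \<in> P" "b \<in> Q"
    hence "a \<noteq> b" "a \<in> T" "b \<in> T" using assms(2-4) by auto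
    thus "xi a b = 0" using assms(1) unfolding orth_def by blast
  qed
  thus ?thesis using perp_span assms(5,6) by blast
qed

lemma notin_span_orth:
  assumes "orth T" "P \<subseteq> T" "t \<in> T" "t \<notin> P" shows "t \<notin> span P"
proof
  assume "t \<in> span P"
  moreover have "t \<in> span {t}" by (rule span_base) simp
  ultimately have "xi t t = 0" using orth_disj[OF assms(1,2), of "{t}"] assms(3,4) by blast
  hence "t = 0" using xi_self by simp
  thus False using assms(1,3) unfolding orth_def by simp
qed

lemma orth_single: "v \<noteq> 0 \<Longrightarrow> orth {v}" unfolding orth_def by simp

lemma lineF:
  assumes dg: "dim_ge scale (k + 1)" and k: "1 \<le> k" and uv: "u \<noteq> 0" "v \<noteq> 0" "xi u v = 0"
  shows "\<exists>Ob. finite Ob \<and> orth Ob \<and> card Ob = k \<and> u \<in> Ob \<and> (\<forall>oo\<in>Ob. xi v oo = 0)"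
proof -
  have ne: "u \<noteq> v" using uv xi_self by auto
  have o: "orth {u, v}" using uv ne unfolding orth_def by (auto simp: xi_sym[of v u])
  have c: "card {u, v} \<le> k + 1" using ne k by simp
  obtain T where T: "{u, v} \<subseteq> T" "finite T" "orth T" "card T = k + 1"
    using ext_univ[OF dg _ o c] by auto
  let ?O = "T - {v}"
  have "finite ?O" using T(2) by simp
  moreover have "orth ?O" using orth_subset[OF T(3)] by blast
  moreover have "card ?O = k" using T by simp
  moreover have "u \<in> ?O"
  proof -
    have "u \<in> T" using T(1) by simp
    thus ?thesis using ne by simp
  qed
  moreover have "\<forall>oo\<in>?O. xi v oo = 0"
  proof
    fix oo assume "oo \<in> ?O"
    hence "oo \<in> T" "v \<noteq> oo" by auto
    moreover have "v \<in> T" using T(1) by simp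
    ultimately show "xi v oo = 0" using T(3) unfolding orth_def by blast
  qed
  ultimately show ?thesis by blast
qed

lemma Hk_affsub: "X \<in> Hk scale k \<Longrightarrow> affsub scale X"
proof -
  assume "X \<in> Hk scale k"
  then obtain p W where "subspace W" "X = (\<lambda>w. p + w) ` W" unfolding Hk_def by blast
  thus ?thesis using affsub_tr by simp
qed

lemma dir_mono: "X \<subseteq> Y \<Longrightarrow> dir X \<subseteq> dir Y"
  unfolding dir_def by blast

lemma Hk_at:
  assumes "X \<in> Hk scale k" "x \<in> X"
  shows "\<exists>Ob. finite Ob \<and> orth Ob \<and> card Ob = k \<and> X = (\<lambda>w. x + w) ` span Ob"
proof -
  obtain p Ob where O: "finite Ob" "orth Ob" "card Ob = k" "X = (\<lambda>w. p + w) ` span Ob"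
    using Hk_orth[OF assms(1)] by blast
  have "X = (\<lambda>w. x + w) ` span Ob" using tr_rebase[OF subspace_span] O(4) assms(2) by blast
  thus ?thesis using O by blast
qed

end

context aniso begin

lemma constrE:
  assumes m: "m < k1" "m < k2" and dg: "dim_ge scale (k1 + k2 - m)"
    and X1: "X1 \<in> Hk scale k1" and x: "x \<in> X1" and z: "z \<in> X1" "z \<noteq> x"
    and yp: "\<forall>d\<in>dir X1. xi (y - x) d = 0"
  shows "\<exists>X2\<in>Hk scale k2. perp_star scale xi X1 X2 \<and> X1 \<inter> X2 \<in> Hk scale m \<and> x \<in> X2 \<and> y \<in> X2 \<and> z \<notin> X2"
proof -
  obtain O1 where O1: "finite O1" "orth O1" "card O1 = k1" "X1 = (\<lambda>w. x + w) ` span O1"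
    using Hk_at[OF X1 x] by blast
  have dX1: "dir X1 = span O1" using O1(4) dir_tr[OF subspace_span] by simp
  define s where "s = z - x"
  have s: "s \<in> span O1" "s \<noteq> 0" using z O1(4) unfolding s_def by auto
  have os: "orth {s}" using orth_single[OF s(2)] .
  have "\<exists>T'. {s} \<subseteq> T' \<and> T' \<subseteq> span O1 \<and> finite T' \<and> orth T' \<and> card T' = k1"
    using ext[OF subspace_span _ _ os span_superset orth_indep[OF O1(2)] O1(1), of k1] s(1) O1(3) m(1)
    by simp
  then obtain O1' where O1': "s \<in> O1'" "O1' \<subseteq> span O1" "finite O1'" "orth O1'" "card O1' = k1" by blast
  have spO: "span O1' = span O1" using span_eq_card[OF O1'(3,4,2) orth_indep[OF O1(2)] O1(1)] O1'(5) O1(3) by simp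
  have "card (O1' - {s}) = k1 - 1" using O1'(1,3,5) by simp
  hence "m \<le> card (O1' - {s})" using m(1) by simp
  then obtain A where A: "A \<subseteq> O1' - {s}" "card A = m" "finite A"
    by (rule obtain_subset_with_card_n)
  have AO: "A \<subseteq> O1'" "s \<notin> A" using A(1) by auto
  define C where "C = O1' - A"
  define p where "p = y - x"
  have pO: "\<forall>t\<in>O1'. xi p t = 0"
  proof
    fix t assume "t \<in> O1'"
    hence "t \<in> dir X1" using dX1 spO span_base by blast
    thus "xi p t = 0" using yp unfolding p_def by blast
  qed
  define T0 where "T0 = (if p = 0 then O1' else insert p O1')"
  have T0: "O1' \<subseteq> T0" "finite T0" "orth T0" "card T0 \<le> k1 + k2 - m" "p \<noteq> 0 \<longrightarrow> p \<in> T0"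
  proof -
    show "O1' \<subseteq> T0" "finite T0" "p \<noteq> 0 \<longrightarrow> p \<in> T0" unfolding T0_def using O1'(3) by auto
    show "orth T0"
    proof (cases "p = 0")
      case True thus ?thesis unfolding T0_def using O1'(4) by simp
    next
      case False thus ?thesis unfolding T0_def using orth_insert(1)[OF O1'(4) False pO] by simp
    qed
    have "card T0 \<le> k1 + 1" unfolding T0_def using O1'(3,5) card_insert_le[of O1' p]
      by (cases "p = 0") (auto simp: card_insert_if)
    thus "card T0 \<le> k1 + k2 - m" using m by linarith
  qed
  obtain T' where T': "T0 \<subseteq> T'" "finite T'" "orth T'" "card T' = k1 + k2 - m"
    using ext_univ[OF dg T0(2,3,4)] by blast
  define D where "D = T' - O1'"
  have OT: "O1' \<subseteq> T'" using T0(1) T'(1) by blast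
  have cD: "card D = k2 - m" unfolding D_def using card_Diff_subset[OF finite_subset[OF OT T'(2)] OT] T'(4) O1'(5) by simp
  have Dsub: "D \<subseteq> T'" unfolding D_def by blast
  have pD: "p \<noteq> 0 \<Longrightarrow> p \<in> D"
  proof -
    assume p0: "p \<noteq> 0"
    hence "p \<in> T'" using T0(5) T'(1) by blast
    moreover have "p \<notin> O1'" using orth_insert(2)[OF O1'(4) p0 pO] .
    ultimately show "p \<in> D" unfolding D_def by blast
  qed
  have ADsub: "A \<union> D \<subseteq> T'" using AO(1) OT Dsub by blast
  have AD: "A \<inter> D = {}" unfolding D_def using AO(1) by blast
  have CA: "C \<inter> A = {}" "C \<subseteq> T'" "A \<subseteq> T'" unfolding C_def using AO(1) OT by auto
  have CD: "C \<inter> D = {}" unfolding C_def D_def by blast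
  have AC: "A \<union> C = O1'" unfolding C_def using AO(1) by blast
  have key: "span O1' \<inter> span (A \<union> D) = span A"
  proof (rule antisym)
    show "span A \<subseteq> span O1' \<inter> span (A \<union> D)" using AO(1) span_mono by (metis Int_greatest Un_upper1)
    show "span O1' \<inter> span (A \<union> D) \<subseteq> span A"
    proof
      fix v assume v: "v \<in> span O1' \<inter> span (A \<union> D)"
      have vT: "v \<in> span T'" using v span_mono[OF OT] by blast
      have "\<forall>t\<in>T'-A. xi v t = 0"
      proof
        fix t assume t: "t \<in> T' - A"
        have tt: "t \<in> span {t}" by (rule span_base) simp
        show "xi v t = 0"
        proof (cases "t \<in> O1'")
          case True
          hence "{t} \<subseteq> T'" "(A \<union> D) \<inter> {t} = {}" using t unfolding D_def by auto
          thus ?thesis using orth_disj[OF T'(3) ADsub _ _ _ tt] v by blast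
        next
          case False
          hence "{t} \<subseteq> T'" "O1' \<inter> {t} = {}" using t by auto
          thus ?thesis using orth_disj[OF T'(3) OT _ _ _ tt] v by blast
        qed
      qed
      thus "v \<in> span A" using span_sub_char[OF T'(2,3) CA(3) vT] by blast
    qed
  qed
  define X2 where "X2 = (\<lambda>w. x + w) ` span (A \<union> D)"
  have fAD: "finite (A \<union> D)" using ADsub T'(2) finite_subset by blast
  have cAD: "card (A \<union> D) = k2"
  proof -
    have "finite A" "finite D" using fAD by auto
    hence "card (A \<union> D) = card A + card D" using AD card_Un_disjoint by blast
    thus ?thesis using A(2) cD m(2) by simp
  qed
  have X2H: "X2 \<in> Hk scale k2" unfolding X2_def using orth_Hk[OF fAD orth_subset[OF T'(3) ADsub]] cAD by simp
  have M: "X1 \<inter> X2 = (\<lambda>w. x + w) ` span A" unfolding X2_def O1(4) tr_Int spO[symmetric] key ..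
  have MH: "X1 \<inter> X2 \<in> Hk scale m"
  proof -
    have "finite A" using fAD by auto
    thus ?thesis unfolding M using orth_Hk[of A x] orth_subset[OF T'(3) CA(3)] A(2) by simp
  qed
  have xX2: "x \<in> X2" unfolding X2_def by (rule tr_nonempty) simp
  have yX2: "y \<in> X2"
  proof -
    have "p \<in> span (A \<union> D)"
    proof (cases "p = 0")
      case True thus ?thesis using span_zero by simp
    next
      case False thus ?thesis using pD span_base by blast
    qed
    thus ?thesis unfolding X2_def p_def by simp
  qed
  have sA: "s \<notin> span A" using notin_span_orth[OF O1'(4) AO(1) O1'(1) AO(2)] .
  have zX2: "z \<notin> X2"
  proof
    assume "z \<in> X2"
    hence "s \<in> span (A \<union> D)" unfolding X2_def s_def by simp
    moreover have "s \<in> span O1'" using O1'(1) span_base by blast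
    ultimately have "s \<in> span A" using key by blast
    thus False using sA by blast
  qed
  define Z1 where "Z1 = (\<lambda>w. x + w) ` span C"
  define Z2 where "Z2 = (\<lambda>w. x + w) ` span D"
  have perpx: "perp_x xi ((\<lambda>w. x + w) ` span P) ((\<lambda>w. x + w) ` span Q)"
    if "P \<subseteq> T'" "Q \<subseteq> T'" "P \<inter> Q = {}" for P Q
  proof -
    have ne: "x \<in> (\<lambda>w. x + w) ` span P" "x \<in> (\<lambda>w. x + w) ` span Q" using tr_nonempty subspace_span by blast+
    have "\<forall>u\<in>span P. \<forall>w\<in>span Q. xi u w = 0" using orth_disj[OF T'(3) that] by blast
    hence "perp xi ((\<lambda>w. x + w) ` span P) ((\<lambda>w. x + w) ` span Q)"
      unfolding perp_dir dir_tr[OF subspace_span] using ne by blast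
    thus ?thesis unfolding perp_x_def using ne by blast
  qed
  have pc: "perp_circ scale xi X1 X2"
    unfolding perp_circ_def
  proof (intro exI conjI)
    show "x \<in> X1 \<inter> X2" using x xX2 by blast
    show "affsub scale Z1" "affsub scale Z2" unfolding Z1_def Z2_def by (simp_all add: affsub_tr)
    show "x \<in> Z1" "x \<in> Z2" unfolding Z1_def Z2_def using tr_nonempty subspace_span by blast+
    show "perp_x xi Z1 (X1 \<inter> X2)" unfolding Z1_def M using perpx[OF CA(2,3,1)] .
    show "perp_x xi Z2 (X1 \<inter> X2)" unfolding Z2_def M using perpx[OF Dsub CA(3)] AD by blast
    show "perp_x xi Z1 Z2" unfolding Z1_def Z2_def using perpx[OF CA(2) Dsub CD] .
    have "join scale (X1 \<inter> X2) Z1 = (\<lambda>w. x + w) ` span (span A \<union> span C)"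
      unfolding M Z1_def by (rule join_tr) simp_all
    also have "\<dots> = (\<lambda>w. x + w) ` span O1" unfolding span_Un_span AC spO ..
    finally show "join scale (X1 \<inter> X2) Z1 = X1" using O1(4) by simp
    have "join scale (X1 \<inter> X2) Z2 = (\<lambda>w. x + w) ` span (span A \<union> span D)"
      unfolding M Z2_def by (rule join_tr) simp_all
    thus "join scale (X1 \<inter> X2) Z2 = X2" unfolding span_Un_span X2_def .
  qed
  have n1: "X1 \<inter> X2 \<noteq> X1"
  proof
    assume e: "X1 \<inter> X2 = X1"
    have "x + s \<in> X1" using O1(4) spO O1'(1) span_base by auto
    hence "x + s \<in> X1 \<inter> X2" using e by simp
    hence "s \<in> span A" unfolding M by simp
    thus False using sA by blast
  qed
  have n2: "X1 \<inter> X2 \<noteq> X2"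
  proof
    assume e: "X1 \<inter> X2 = X2"
    have "card D \<noteq> 0" using cD m(2) by simp
    hence "D \<noteq> {}" by (rule contrapos_nn) simp
    then obtain e0 where e0: "e0 \<in> D" by blast
    have "x + e0 \<in> X2" unfolding X2_def using e0 span_base by auto
    hence "x + e0 \<in> X1" using e by blast
    hence "e0 \<in> span O1'" using O1(4) spO by simp
    moreover have "e0 \<notin> span O1'" using notin_span_orth[OF T'(3) OT] e0 unfolding D_def by blast
    ultimately show False by blast
  qed
  have "perp_star scale xi X1 X2" unfolding perp_star_def using pc n1 n2 by blast
  thus ?thesis using X2H MH xX2 yX2 zX2 by blast
qed

end


definition NN :: "('p set \<Rightarrow> 'p set \<Rightarrow> bool) \<Rightarrow> 'p set set \<Rightarrow> 'p set \<Rightarrow> 'p \<Rightarrow> 'p \<Rightarrow> bool" where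
  "NN R H2 X1 x y \<longleftrightarrow> (\<forall>z. z \<in> X1 \<and> z \<noteq> x \<longrightarrow>
     (\<exists>X2\<in>H2. R X1 X2 \<and> (\<exists>w. w \<in> X1 \<and> w \<notin> X2) \<and> (\<exists>w. w \<in> X2 \<and> w \<notin> X1) \<and> x \<in> X2 \<and> y \<in> X2 \<and> z \<notin> X2))"

context aniso begin

lemma perp_span_all: "\<forall>t\<in>T. xi v t = 0 \<Longrightarrow> d \<in> span T \<Longrightarrow> xi v d = 0"
proof -
  assume a: "\<forall>t\<in>T. xi v t = 0" "d \<in> span T"
  have "\<forall>t\<in>T. xi t v = 0" using a(1) by (simp add: xi_sym[of _ v])
  hence "xi d v = 0" using perp_span1 a(2) by blast
  thus ?thesis by (simp add: xi_sym[of d v])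
qed

lemma N_iff:
  assumes Qs: "\<And>X2. R X1 X2 \<Longrightarrow> perp_circ scale xi X1 X2"
    and Qc: "\<And>X2. X2 \<in> Hk scale k2 \<Longrightarrow> perp_star scale xi X1 X2 \<Longrightarrow> X1 \<inter> X2 \<in> Hk scale m \<Longrightarrow> R X1 X2"
    and m: "m < k1" "m < k2" and dg: "dim_ge scale (k1 + k2 - m)"
    and X1: "X1 \<in> Hk scale k1" and x: "x \<in> X1"
  shows "NN R (Hk scale k2) X1 x y \<longleftrightarrow> (\<forall>d\<in>dir X1. xi (y - x) d = 0)"
proof
  assume yp: "\<forall>d\<in>dir X1. xi (y - x) d = 0"
  show "NN R (Hk scale k2) X1 x y" unfolding NN_def
  proof (intro allI impI)
    fix z assume z: "z \<in> X1 \<and> z \<noteq> x"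
    obtain X2 where X2: "X2 \<in> Hk scale k2" "perp_star scale xi X1 X2" "X1 \<inter> X2 \<in> Hk scale m"
      "x \<in> X2" "y \<in> X2" "z \<notin> X2"
      using constrE[OF m dg X1 x _ _ yp] z by blast
    have "R X1 X2" using Qc X2(1-3) by blast
    moreover have "\<exists>w. w \<in> X1 \<and> w \<notin> X2" "\<exists>w. w \<in> X2 \<and> w \<notin> X1"
      using X2(2) unfolding perp_star_def by blast+
    ultimately show "\<exists>X2\<in>Hk scale k2. R X1 X2 \<and> (\<exists>w. w \<in> X1 \<and> w \<notin> X2) \<and> (\<exists>w. w \<in> X2 \<and> w \<notin> X1) \<and> x \<in> X2 \<and> y \<in> X2 \<and> z \<notin> X2"
      using X2 by blast
  qed
next
  assume N: "NN R (Hk scale k2) X1 x y"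
  obtain Ob where O: "finite Ob" "orth Ob" "card Ob = k1" "X1 = (\<lambda>w. x + w) ` span Ob"
    using Hk_at[OF X1 x] by blast
  have dX1: "dir X1 = span Ob" using O(4) dir_tr[OF subspace_span] by simp
  define s where "s = proj Ob (y - x)"
  define r where "r = (y - x) - s"
  have sO: "s \<in> span Ob" unfolding s_def by (rule proj_span)
  have rO: "\<forall>t\<in>Ob. xi r t = 0" unfolding r_def s_def using proj_perp[OF O(1,2)] by blast
  have yxsr: "y - x = s + r" unfolding r_def by simp
  show "\<forall>d\<in>dir X1. xi (y - x) d = 0"
  proof (cases "s = 0")
    case True
    hence "y - x = r" using yxsr by simp
    thus ?thesis using perp_span_all[OF rO] dX1 by simp
  next
    case False
    define z where "z = x + s"
    have z: "z \<in> X1" "z \<noteq> x" unfolding z_def using O(4) sO False by auto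
    then obtain X2 where X2: "X2 \<in> Hk scale k2" "R X1 X2" "x \<in> X2" "y \<in> X2" "z \<notin> X2"
      using N unfolding NN_def by blast
    obtain w p' where wp: "y - x = w + p'" "w \<in> dir (X1 \<inter> X2)" "\<forall>d\<in>dir X1. xi p' d = 0"
      using soundA[OF Hk_affsub[OF X1] Hk_affsub[OF X2(1)] Qs[OF X2(2)] x X2(3,4)] by blast
    have wO: "w \<in> span Ob" using wp(2) dir_mono[of "X1 \<inter> X2" X1] dX1 by blast
    have sw: "s - w \<in> span Ob" using sO wO span_diff by blast
    have e: "s - w = p' - r" using wp(1) yxsr by (simp add: algebra_simps)
    have "xi p' (s - w) = 0" using wp(3) dX1 sw by blast
    moreover have "xi r (s - w) = 0" using perp_span_all[OF rO sw] .
    ultimately have "xi (s - w) (s - w) = 0" using e by (simp add: xi_diff1)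
    hence sw0: "s = w" using xi_self by simp
    obtain S2 where S2: "subspace S2" "X2 = (\<lambda>w. x + w) ` S2" using affsub_at[OF Hk_affsub[OF X2(1)] X2(3)] by blast
    obtain m1 m2 where mm: "m1 \<in> X1 \<inter> X2" "m2 \<in> X1 \<inter> X2" "w = m2 - m1" using wp(2) unfolding dir_def by blast
    have "m1 - x \<in> S2" "m2 - x \<in> S2" using mm S2(2) by auto
    hence "(m2 - x) - (m1 - x) \<in> S2" using subspace_diff[OF S2(1)] by blast
    moreover have "(m2 - x) - (m1 - x) = z - x" unfolding z_def using sw0 mm(3) by simp
    ultimately have "z \<in> X2" using S2(2) by simp
    thus ?thesis using X2(5) by blast
  qed
qed

lemma lines_perp_iff:
  assumes ab: "a \<noteq> b" and cd: "c \<noteq> d"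
  shows "(\<exists>L1\<in>Hk scale 1. \<exists>L2\<in>Hk scale 1. a \<in> L1 \<and> b \<in> L1 \<and> c \<in> L2 \<and> d \<in> L2 \<and> line_perp xi L1 L2)
         \<longleftrightarrow> xi (b - a) (d - c) = 0"
proof
  assume "\<exists>L1\<in>Hk scale 1. \<exists>L2\<in>Hk scale 1. a \<in> L1 \<and> b \<in> L1 \<and> c \<in> L2 \<and> d \<in> L2 \<and> line_perp xi L1 L2"
  then obtain L1 L2 where L: "a \<in> L1" "b \<in> L1" "c \<in> L2" "d \<in> L2" "line_perp xi L1 L2" by blast
  have "b - a \<in> dir L1" "d - c \<in> dir L2" unfolding dir_def using L by blast+
  thus "xi (b - a) (d - c) = 0" using L(5) unfolding line_perp_dir by blast
next
  assume o: "xi (b - a) (d - c) = 0"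
  let ?L1 = "(\<lambda>w. a + w) ` span {b - a}" and ?L2 = "(\<lambda>w. c + w) ` span {d - c}"
  have n: "b - a \<noteq> 0" "d - c \<noteq> 0" using ab cd by auto
  have H: "?L1 \<in> Hk scale 1" "?L2 \<in> Hk scale 1" using orth_Hk[OF _ orth_single[OF n(1)], of a] orth_Hk[OF _ orth_single[OF n(2)], of c] by simp_all
  have m: "a \<in> ?L1" "b \<in> ?L1" "c \<in> ?L2" "d \<in> ?L2" using span_base[of "b - a" "{b - a}"] span_base[of "d - c" "{d - c}"] span_zero by auto
  have "\<forall>u\<in>span {b - a}. \<forall>w\<in>span {d - c}. xi u w = 0"
    using perp_span[of "{b - a}" "{d - c}"] o by blast
  hence "line_perp xi ?L1 ?L2" unfolding line_perp_dir dir_tr[OF subspace_span] .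
  thus "\<exists>L1\<in>Hk scale 1. \<exists>L2\<in>Hk scale 1. a \<in> L1 \<and> b \<in> L1 \<and> c \<in> L2 \<and> d \<in> L2 \<and> line_perp xi L1 L2"
    using H m by blast
qed

end

context aniso begin

lemma col_iff:
  assumes dg: "dim_ge scale (k1 + 1)" and k: "1 \<le> k1" and ab: "a \<noteq> b"
  shows "(\<forall>X\<in>Hk scale k1. a \<in> X \<longrightarrow> b \<in> X \<longrightarrow> c \<in> X) \<longleftrightarrow> (\<exists>L\<in>Hk scale 1. a \<in> L \<and> b \<in> L \<and> c \<in> L)"
proof
  assume L: "\<exists>L\<in>Hk scale 1. a \<in> L \<and> b \<in> L \<and> c \<in> L"
  then obtain L where L: "L \<in> Hk scale 1" "a \<in> L" "b \<in> L" "c \<in> L" by blast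
  obtain Ob where O: "finite Ob" "orth Ob" "card Ob = 1" "L = (\<lambda>w. a + w) ` span Ob"
    using Hk_at[OF L(1,2)] by blast
  obtain e where e: "Ob = {e}" using O(3) card_1_singletonE by blast
  have be: "b - a \<in> span {e}" "c - a \<in> span {e}" using L(3,4) O(4) e by auto
  obtain kk where kk: "b - a = scale kk e" using be(1) unfolding span_singleton by blast
  have kk0: "kk \<noteq> 0" using kk ab by auto
  have "scale (inverse kk) (b - a) = e" using kk kk0 by simp
  hence "e \<in> span {b - a}" using span_scale[OF span_base[of "b - a" "{b - a}"]] by (metis singletonI)
  hence sub: "span {e} \<subseteq> span {b - a}" using span_minimal[OF _ subspace_span] by blast
  show "\<forall>X\<in>Hk scale k1. a \<in> X \<longrightarrow> b \<in> X \<longrightarrow> c \<in> X"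
  proof (intro ballI impI)
    fix X assume X: "X \<in> Hk scale k1" "a \<in> X" "b \<in> X"
    obtain S where S: "subspace S" "X = (\<lambda>w. a + w) ` S" using affsub_at[OF Hk_affsub[OF X(1)] X(2)] by blast
    have "b - a \<in> S" using X(3) S(2) by simp
    hence "span {b - a} \<subseteq> S" using span_minimal[OF _ S(1)] by blast
    hence "c - a \<in> S" using sub be(2) by blast
    thus "c \<in> X" using S(2) by simp
  qed
next
  assume all: "\<forall>X\<in>Hk scale k1. a \<in> X \<longrightarrow> b \<in> X \<longrightarrow> c \<in> X"
  define u where "u = b - a"
  have u0: "u \<noteq> 0" using ab unfolding u_def by simp
  let ?L0 = "(\<lambda>w. a + w) ` span {u}"
  have L0: "?L0 \<in> Hk scale 1" using orth_Hk[OF _ orth_single[OF u0], of a] by simp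
  have abL: "a \<in> ?L0" "b \<in> ?L0" unfolding u_def using span_base[of "b - a" "{b - a}"] span_zero by auto
  have "c \<in> ?L0"
  proof (rule ccontr)
    assume nc: "c \<notin> ?L0"
    define w where "w = c - a"
    have wn: "w \<notin> span {u}" using nc unfolding w_def by simp
    define v where "v = w - proj {u} w"
    have v0: "v \<noteq> 0" using wn proj_span[of "{u}" w] unfolding v_def by auto
    have vu: "xi v u = 0" unfolding v_def using proj_perp[OF _ orth_single[OF u0]] by simp
    obtain Ob where O: "finite Ob" "orth Ob" "card Ob = k1" "u \<in> Ob" "\<forall>oo\<in>Ob. xi v oo = 0"
      using lineF[OF dg k u0 v0] vu by (auto simp: xi_sym[of u v])
    let ?X = "(\<lambda>w. a + w) ` span Ob"
    have XH: "?X \<in> Hk scale k1" using orth_Hk[OF O(1,2), of a] O(3) by simp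
    have "a \<in> ?X" "b \<in> ?X" using span_zero span_base[OF O(4)] unfolding u_def by auto
    hence "c \<in> ?X" using all XH by blast
    hence wO: "w \<in> span Ob" unfolding w_def by simp
    have "span {u} \<subseteq> span Ob" using O(4) span_mono by blast
    hence "proj {u} w \<in> span Ob" using proj_span by blast
    hence "v \<in> span Ob" unfolding v_def using wO span_diff by blast
    hence "xi v v = 0" using perp_span_all[OF O(5)] by blast
    thus False using v0 xi_self by simp
  qed
  thus "\<exists>L\<in>Hk scale 1. a \<in> L \<and> b \<in> L \<and> c \<in> L" using L0 abL by blast
qed

lemma psi_iff:
  assumes Qs: "\<And>X1 X2. X1 \<in> Hk scale k1 \<Longrightarrow> R X1 X2 \<Longrightarrow> perp_circ scale xi X1 X2"
    and Qc: "\<And>X1 X2. X1 \<in> Hk scale k1 \<Longrightarrow> X2 \<in> Hk scale k2 \<Longrightarrow> perp_star scale xi X1 X2 \<Longrightarrow> X1 \<inter> X2 \<in> Hk scale m \<Longrightarrow> R X1 X2"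
    and m: "m < k1" "m < k2" and dg: "dim_ge scale (k1 + k2 - m)" and k: "1 \<le> k1"
    and ab: "a \<noteq> b" and cd: "c \<noteq> d"
  shows "(\<exists>X\<in>Hk scale k1. a \<in> X \<and> b \<in> X \<and> (\<exists>x. x \<in> X \<and> NN R (Hk scale k2) X x c \<and> NN R (Hk scale k2) X x d))
     \<longleftrightarrow> (\<exists>L1\<in>Hk scale 1. \<exists>L2\<in>Hk scale 1. a \<in> L1 \<and> b \<in> L1 \<and> c \<in> L2 \<and> d \<in> L2 \<and> line_perp xi L1 L2)"
proof -
  have NI: "NN R (Hk scale k2) X x y \<longleftrightarrow> (\<forall>d\<in>dir X. xi (y - x) d = 0)"
    if "X \<in> Hk scale k1" "x \<in> X" for X x y
    using N_iff[of R X k2 m k1 x y, OF Qs[OF that(1)] Qc[OF that(1)] m dg that] by blast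
  have dg1: "dim_ge scale (k1 + 1)" using dim_ge_mono[OF dg] m by simp
  show ?thesis unfolding lines_perp_iff[OF ab cd]
  proof
    assume "\<exists>X\<in>Hk scale k1. a \<in> X \<and> b \<in> X \<and> (\<exists>x. x \<in> X \<and> NN R (Hk scale k2) X x c \<and> NN R (Hk scale k2) X x d)"
    then obtain X x where X: "X \<in> Hk scale k1" "a \<in> X" "b \<in> X" "x \<in> X"
      "NN R (Hk scale k2) X x c" "NN R (Hk scale k2) X x d" by blast
    have ba: "b - a \<in> dir X" unfolding dir_def using X(2,3) by blast
    have "xi (c - x) (b - a) = 0" "xi (d - x) (b - a) = 0" using NI[OF X(1,4)] X(5,6) ba by blast+
    hence "xi ((d - x) - (c - x)) (b - a) = 0" by (simp add: xi_diff1)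
    moreover have "(d - x) - (c - x) = d - c" by simp
    ultimately show "xi (b - a) (d - c) = 0" by (simp add: xi_sym[of "d - c"])
  next
    assume o: "xi (b - a) (d - c) = 0"
    have n: "b - a \<noteq> 0" "d - c \<noteq> 0" using ab cd by auto
    obtain Ob where O: "finite Ob" "orth Ob" "card Ob = k1" "b - a \<in> Ob" "\<forall>oo\<in>Ob. xi (d - c) oo = 0"
      using lineF[OF dg1 k n o] by blast
    let ?X = "(\<lambda>w. a + w) ` span Ob"
    have XH: "?X \<in> Hk scale k1" using orth_Hk[OF O(1,2), of a] O(3) by simp
    have abX: "a \<in> ?X" "b \<in> ?X" using span_zero span_base[OF O(4)] by auto
    define x where "x = a + proj Ob (c - a)"
    have xX: "x \<in> ?X" unfolding x_def using proj_span by simp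
    have dX: "dir ?X = span Ob" using dir_tr[OF subspace_span] .
    have cx: "c - x = (c - a) - proj Ob (c - a)" unfolding x_def by (simp add: algebra_simps)
    have cO: "\<forall>t\<in>Ob. xi (c - x) t = 0" unfolding cx using proj_perp[OF O(1,2)] by blast
    have dO: "\<forall>t\<in>Ob. xi (d - x) t = 0"
    proof
      fix t assume t: "t \<in> Ob"
      have "xi ((d - c) + (c - x)) t = xi (d - c) t + xi (c - x) t" by (rule xi_add1)
      also have "\<dots> = 0" using O(5) cO t by simp
      also have "(d - c) + (c - x) = d - x" by simp
      finally show "xi (d - x) t = 0" .
    qed
    have "NN R (Hk scale k2) ?X x c" "NN R (Hk scale k2) ?X x d"
      using NI[OF XH xX] dX perp_span_all[OF cO] perp_span_all[OF dO] by auto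
    thus "\<exists>X\<in>Hk scale k1. a \<in> X \<and> b \<in> X \<and> (\<exists>x. x \<in> X \<and> NN R (Hk scale k2) X x c \<and> NN R (Hk scale k2) X x d)"
      using XH abX xX by blast
  qed
qed

end


definition Imp :: "fo \<Rightarrow> fo \<Rightarrow> fo" where "Imp A B = Neg (Conj A (Neg B))"
definition AllP :: "nat \<Rightarrow> fo \<Rightarrow> fo" where "AllP x A = Neg (ExP x (Neg A))"
definition All1 :: "nat \<Rightarrow> fo \<Rightarrow> fo" where "All1 x A = Neg (Ex1 x (Neg A))"

definition Nf :: "nat \<Rightarrow> fo" where
  "Nf i = AllP 5 (Imp (Conj (In1 5 0) (Neg (EqP 5 4)))
     (Ex2 0 (Conj (Rel 0 0) (Conj (ExP 6 (Conj (In1 6 0) (Neg (In2 6 0))))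
        (Conj (ExP 6 (Conj (In2 6 0) (Neg (In1 6 0)))) (Conj (In2 4 0) (Conj (In2 i 0) (Neg (In2 5 0)))))))))"

definition Psi :: fo where
  "Psi = Conj (Neg (EqP 0 1)) (Conj (Neg (EqP 2 3))
     (Ex1 0 (Conj (In1 0 0) (Conj (In1 1 0) (ExP 4 (Conj (In1 4 0) (Conj (Nf 2) (Nf 3))))))))"

definition Phi :: fo where
  "Phi = Conj (Neg (EqP 0 1)) (All1 0 (Imp (Conj (In1 0 0) (In1 1 0)) (In1 2 0)))"

lemma sat_Nf:
  assumes "i \<noteq> 5" "i \<noteq> 6"
  shows "sat UNIV H1 H2 R e0 e1 e2 (Nf i) \<longleftrightarrow> NN R H2 (e1 0) (e0 4) (e0 i)"
  unfolding Nf_def AllP_def Imp_def NN_def using assms by (simp; blast)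

lemma sat_Psi:
  "sat UNIV H1 H2 R e0 e1 e2 Psi \<longleftrightarrow> e0 0 \<noteq> e0 1 \<and> e0 2 \<noteq> e0 3 \<and>
     (\<exists>X\<in>H1. e0 0 \<in> X \<and> e0 1 \<in> X \<and> (\<exists>x. x \<in> X \<and> NN R H2 X x (e0 2) \<and> NN R H2 X x (e0 3)))"
  unfolding Psi_def by (simp add: sat_Nf)

lemma sat_Phi:
  "sat UNIV H1 H2 R e0 e1 e2 Phi \<longleftrightarrow> e0 0 \<noteq> e0 1 \<and> (\<forall>X\<in>H1. e0 0 \<in> X \<longrightarrow> e0 1 \<in> X \<longrightarrow> e0 2 \<in> X)"
  unfolding Phi_def All1_def Imp_def by auto

context aniso begin

lemma gen_def:
  assumes Qs: "\<And>X1 X2. X1 \<in> Hk scale k1 \<Longrightarrow> R X1 X2 \<Longrightarrow> perp_circ scale xi X1 X2"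
    and Qc: "\<And>X1 X2. X1 \<in> Hk scale k1 \<Longrightarrow> X2 \<in> Hk scale k2 \<Longrightarrow> perp_star scale xi X1 X2 \<Longrightarrow> X1 \<inter> X2 \<in> Hk scale m \<Longrightarrow> R X1 X2"
    and m: "m < k1" "m < k2" and dg: "dim_ge scale (k1 + k2 - m)" and k: "1 \<le> k1"
  shows "fo_definable_in UNIV (Hk scale 1) (line_perp xi) (Hk scale k1) (Hk scale k2) R"
  unfolding fo_definable_in_def
proof (intro exI conjI allI impI)
  have dg1: "dim_ge scale (k1 + 1)" using dim_ge_mono[OF dg] m by simp
  fix e0 :: "nat \<Rightarrow> 'v" and e1 e2
  show "sat UNIV (Hk scale k1) (Hk scale k2) R e0 e1 e2 Phi \<longleftrightarrow>
      e0 0 \<noteq> e0 1 \<and> (\<exists>L\<in>Hk scale 1. e0 0 \<in> L \<and> e0 1 \<in> L \<and> e0 2 \<in> L)"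
  proof (cases "e0 0 = e0 1")
    case True thus ?thesis unfolding sat_Phi by simp
  next
    case False
    have "(\<forall>X\<in>Hk scale k1. e0 0 \<in> X \<longrightarrow> e0 1 \<in> X \<longrightarrow> e0 2 \<in> X) = (\<exists>L\<in>Hk scale 1. e0 0 \<in> L \<and> e0 1 \<in> L \<and> e0 2 \<in> L)"
      by (rule col_iff[OF dg1 k False])
    thus ?thesis unfolding sat_Phi using False by simp
  qed
next
  fix e0 :: "nat \<Rightarrow> 'v" and e1 e2
  show "sat UNIV (Hk scale k1) (Hk scale k2) R e0 e1 e2 Psi \<longleftrightarrow>
      e0 0 \<noteq> e0 1 \<and> e0 2 \<noteq> e0 3 \<and>
      (\<exists>L1\<in>Hk scale 1. \<exists>L2\<in>Hk scale 1. e0 0 \<in> L1 \<and> e0 1 \<in> L1 \<and> e0 2 \<in> L2 \<and> e0 3 \<in> L2 \<and> line_perp xi L1 L2)"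
  proof (cases "e0 0 \<noteq> e0 1 \<and> e0 2 \<noteq> e0 3")
    case False thus ?thesis unfolding sat_Psi by auto
  next
    case True
    have "(\<exists>X\<in>Hk scale k1. e0 0 \<in> X \<and> e0 1 \<in> X \<and> (\<exists>x. x \<in> X \<and> NN R (Hk scale k2) X x (e0 2) \<and> NN R (Hk scale k2) X x (e0 3)))
     = (\<exists>L1\<in>Hk scale 1. \<exists>L2\<in>Hk scale 1. e0 0 \<in> L1 \<and> e0 1 \<in> L1 \<and> e0 2 \<in> L2 \<and> e0 3 \<in> L2 \<and> line_perp xi L1 L2)"
      using True by (intro psi_iff[OF Qs Qc m dg k]) auto
    thus ?thesis unfolding sat_Psi using True by simp
  qed
qed

end

theorem theorem2p4:
  fixes scale :: "'f::field \<Rightarrow> 'v::ab_group_add \<Rightarrow> 'v"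
    and xi :: "'v \<Rightarrow> 'v \<Rightarrow> 'f"
    and k1 k2 :: nat
  assumes "anisotropic_space scale xi"
    and "1 \<le> k1" and "1 \<le> k2"
  shows "(\<forall>m::nat. m < k1 \<and> m < k2 \<and> dim_ge scale (k1 + k2 - m) \<longrightarrow>
            fo_definable_in UNIV (Hk scale 1) (line_perp xi)
              (Hk scale k1) (Hk scale k2) (perp_m scale xi m k1 k2))
       \<and> (dim_ge scale (k1 + 1) \<and> dim_ge scale (k2 + 1) \<longrightarrow>
            fo_definable_in UNIV (Hk scale 1) (line_perp xi)
              (Hk scale k1) (Hk scale k2)
              (\<lambda>X1 X2. perp_circ scale xi X1 X2 \<and> X1 \<in> Hk scale k1 \<and> X2 \<in> Hk scale k2))"
proof -
  interpret aniso scale xi by (rule aniso.intro) (rule assms(1))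
  have A: "fo_definable_in UNIV (Hk scale 1) (line_perp xi) (Hk scale k1) (Hk scale k2) (perp_m scale xi m k1 k2)"
    if m: "m < k1" "m < k2" and dg: "dim_ge scale (k1 + k2 - m)" for m
  proof (rule gen_def[OF _ _ m dg assms(2)])
    show "perp_circ scale xi X1 X2" if "perp_m scale xi m k1 k2 X1 X2" for X1 X2
      using that unfolding perp_m_def perp_star_def by blast
    show "perp_m scale xi m k1 k2 X1 X2"
      if "X1 \<in> Hk scale k1" "X2 \<in> Hk scale k2" "perp_star scale xi X1 X2" "X1 \<inter> X2 \<in> Hk scale m" for X1 X2
      using that unfolding perp_m_def by blast
  qed
  have B: "fo_definable_in UNIV (Hk scale 1) (line_perp xi) (Hk scale k1) (Hk scale k2)
              (\<lambda>X1 X2. perp_circ scale xi X1 X2 \<and> X1 \<in> Hk scale k1 \<and> X2 \<in> Hk scale k2)"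
    if dg: "dim_ge scale (k1 + 1)" "dim_ge scale (k2 + 1)"
  proof -
    define m where "m = min k1 k2 - 1"
    have m: "m < k1" "m < k2" unfolding m_def using assms(2,3) by auto
    have "k1 + k2 - m = k2 + 1 \<or> k1 + k2 - m = k1 + 1" unfolding m_def using assms(2,3) by auto
    hence dgm: "dim_ge scale (k1 + k2 - m)" using dg by auto
    show ?thesis
    proof (rule gen_def[OF _ _ m dgm assms(2)])
      show "perp_circ scale xi X1 X2" if "perp_circ scale xi X1 X2 \<and> X1 \<in> Hk scale k1 \<and> X2 \<in> Hk scale k2" for X1 X2
        using that by blast
      show "perp_circ scale xi X1 X2 \<and> X1 \<in> Hk scale k1 \<and> X2 \<in> Hk scale k2"
        if "X1 \<in> Hk scale k1" "X2 \<in> Hk scale k2" "perp_star scale xi X1 X2" "X1 \<inter> X2 \<in> Hk scale m" for X1 X2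
        using that unfolding perp_star_def by blast
    qed
  qed
  show ?thesis using A B by blast
qed


end
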